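(* Let $G=(V_1,V_2,E)$ be a biregular graph. Then $\mathcal{A}(G)\cong\mathcal{A}_{RW}(G)$.
   Context: Graphs are simple (no loops or multiple edges), connected, with countable (finite or infinite) vertex set $V$, and locally finite ($\deg(i)<\infty$ for all $i$, where $\deg(i)$ is the number of neighbors of $i$). The adjacency matrix is $A=(a_{ij})$ with $a_{ij}=1$ if $i,j$ are neighbors and $0$ otherwise. A graph is biregular if it is bipartite with bipartition $V=V_1\sqcup V_2$ (every edge joins $V_1$ to $V_2$) such that all vertices of $V_1$ have a common degree $d_1$ and all vertices of $V_2$ have a common degree $d_2$. An evolution algebra over $\mathbb{R}$ is an algebra with a countable basis $\{e_i\}$ (natural basis) such that $e_i\cdot e_j=0$ for $i\ne j$ and $e_i\cdot e_i=\sum_k c_{ik}e_k$. $\mathcal{A}(G)$ has natural basis $\{e_i:i\in V\}$ with $e_i\cdot e_i=\sum_{k\in V}a_{ik}e_k$; $\mathcal{A}_{RW}(G)$ has natural basis $\{e_i:i\in V\}$ with $e_i\cdot e_i=\sum_{k\in V}\frac{a_{ik}}{\deg(i)}e_k$; in both, $e_i\cdot e_j=0$ for $i\ne j$. $\cong$ denotes algebra isomorphism. *)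

theory Defs
  imports Complex_Main "HOL-Library.Countable_Set"
begin

definition graph :: "'v set \<Rightarrow> ('v \<Rightarrow> 'v \<Rightarrow> bool) \<Rightarrow> bool" where
  "graph V E \<longleftrightarrow> countable V
     \<and> (\<forall>i j. E i j \<longrightarrow> i \<in> V \<and> j \<in> V)
     \<and> (\<forall>i j. E i j \<longrightarrow> E j i)
     \<and> (\<forall>i. \<not> E i i)
     \<and> (\<forall>i\<in>V. \<forall>j\<in>V. (i, j) \<in> {(a, b). E a b}\<^sup>*)
     \<and> (\<forall>i\<in>V. finite {j. E i j})"

definition deg :: "('v \<Rightarrow> 'v \<Rightarrow> bool) \<Rightarrow> 'v \<Rightarrow> nat" where
  "deg E i = card {j. E i j}"

definition biregular :: "'v set \<Rightarrow> ('v \<Rightarrow> 'v \<Rightarrow> bool) \<Rightarrow> bool" where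
  "biregular V E \<longleftrightarrow> (\<exists>V1 V2 d1 d2. V1 \<inter> V2 = {} \<and> V1 \<union> V2 = V
     \<and> (\<forall>i j. E i j \<longrightarrow> (i \<in> V1 \<and> j \<in> V2) \<or> (i \<in> V2 \<and> j \<in> V1))
     \<and> (\<forall>i\<in>V1. deg E i = d1) \<and> (\<forall>i\<in>V2. deg E i = d2))"

text \<open>Evolution algebra with natural basis indexed by V and structure constants c:
  elements are finitely supported real functions on V (coordinates w.r.t. the natural basis),
  e_i e_i = sum_k c i k e_k, e_i e_j = 0 for i \<noteq> j, extended bilinearly.\<close>

definition evo_carrier :: "'v set \<Rightarrow> ('v \<Rightarrow> real) set" where
  "evo_carrier V = {x. (\<forall>i. i \<notin> V \<longrightarrow> x i = 0) \<and> finite {i. x i \<noteq> 0}}"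

definition evo_mult :: "('v \<Rightarrow> 'v \<Rightarrow> real) \<Rightarrow> ('v \<Rightarrow> real) \<Rightarrow> ('v \<Rightarrow> real) \<Rightarrow> ('v \<Rightarrow> real)" where
  "evo_mult c x y = (\<lambda>k. \<Sum>i\<in>{i. x i \<noteq> 0 \<and> y i \<noteq> 0}. x i * y i * c i k)"

definition evo_iso :: "'v set \<Rightarrow> ('v \<Rightarrow> 'v \<Rightarrow> real) \<Rightarrow> ('v \<Rightarrow> 'v \<Rightarrow> real) \<Rightarrow> bool" where
  "evo_iso V c d \<longleftrightarrow> (\<exists>f. bij_betw f (evo_carrier V) (evo_carrier V)
     \<and> (\<forall>x\<in>evo_carrier V. \<forall>y\<in>evo_carrier V. f (\<lambda>k. x k + y k) = (\<lambda>k. f x k + f y k))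
     \<and> (\<forall>a::real. \<forall>x\<in>evo_carrier V. f (\<lambda>k. a * x k) = (\<lambda>k. a * f x k))
     \<and> (\<forall>x\<in>evo_carrier V. \<forall>y\<in>evo_carrier V. f (evo_mult c x y) = evo_mult d (f x) (f y)))"

definition adj_const :: "('v \<Rightarrow> 'v \<Rightarrow> bool) \<Rightarrow> 'v \<Rightarrow> 'v \<Rightarrow> real" where
  "adj_const E i k = (if E i k then 1 else 0)"

definition rw_const :: "('v \<Rightarrow> 'v \<Rightarrow> bool) \<Rightarrow> 'v \<Rightarrow> 'v \<Rightarrow> real" where
  "rw_const E i k = (if E i k then 1 / real (deg E i) else 0)"

end

theory Submission
  imports Defs
begin

theorem proposition2p10:
  fixes V :: "'v set" and E :: "'v \<Rightarrow> 'v \<Rightarrow> bool"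
  assumes "graph V E" and "biregular V E"
  shows "evo_iso V (adj_const E) (rw_const E)"
proof -
  obtain V1 V2 d1 d2 where dis: "V1 \<inter> V2 = {}" and un: "V1 \<union> V2 = V"
    and bip: "\<And>i j. E i j \<Longrightarrow> (i \<in> V1 \<and> j \<in> V2) \<or> (i \<in> V2 \<and> j \<in> V1)"
    and dg1: "\<And>i. i \<in> V1 \<Longrightarrow> deg E i = d1" and dg2: "\<And>i. i \<in> V2 \<Longrightarrow> deg E i = d2"
    using assms(2) unfolding biregular_def by metis
  have fin: "\<And>i. i \<in> V \<Longrightarrow> finite {j. E i j}" using assms(1) unfolding graph_def by blast
  have EV: "\<And>i j. E i j \<Longrightarrow> i \<in> V" using assms(1) unfolding graph_def by blast
  have degpos: "\<And>i k. E i k \<Longrightarrow> deg E i \<ge> 1"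
  proof -
    fix i k assume "E i k"
    then have "finite {j. E i j}" "k \<in> {j. E i j}" using fin EV by auto
    then have "card {j. E i j} \<noteq> 0" by (metis card_0_eq empty_iff)
    then show "deg E i \<ge> 1" unfolding deg_def by simp
  qed
  define D1 :: real where "D1 = real (max d1 1)"
  define D2 :: real where "D2 = real (max d2 1)"
  have D1p: "D1 > 0" and D2p: "D2 > 0" unfolding D1_def D2_def by auto
  define a where "a = root 3 (D1^2 * D2)"
  have ap: "a > 0" unfolding a_def using D1p D2p by simp
  have a3: "a ^ 3 = D1^2 * D2" unfolding a_def using D1p D2p by simp
  define b where "b = a^2 / D1"
  have bp: "b > 0" unfolding b_def using ap D1p by simp
  have ab: "a = b^2 / D2"
  proof -
    have "b^2 / D2 = a^4 / (D1^2 * D2)" unfolding b_def using D1p D2p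
      by (simp add: power_divide power_mult[symmetric])
    also have "\<dots> = a^4 / a^3" using a3 by simp
    also have "\<dots> = a" using ap by (simp add: power_eq_if field_simps)
    finally show ?thesis by simp
  qed
  define \<alpha> where "\<alpha> = (\<lambda>k. if k \<in> V1 then a else b)"
  have \<alpha>p: "\<And>k. \<alpha> k > 0" unfolding \<alpha>_def using ap bp by auto
  have key: "\<And>i k. \<alpha> k * adj_const E i k = (\<alpha> i)^2 * rw_const E i k"
  proof -
    fix i k
    show "\<alpha> k * adj_const E i k = (\<alpha> i)^2 * rw_const E i k"
    proof (cases "E i k")
      case False then show ?thesis unfolding adj_const_def rw_const_def by simp
    next
      case True
      have dp: "deg E i \<ge> 1" using degpos[OF True] .
      from bip[OF True] show ?thesis
      proof
        assume h: "i \<in> V1 \<and> k \<in> V2"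
        then have "k \<notin> V1" using dis by blast
        moreover have "real (deg E i) = D1" using dg1 h dp unfolding D1_def by auto
        ultimately show ?thesis using h True D1p unfolding adj_const_def rw_const_def \<alpha>_def b_def
          by simp
      next
        assume h: "i \<in> V2 \<and> k \<in> V1"
        then have "i \<notin> V1" using dis by blast
        moreover have "real (deg E i) = D2" using dg2 h dp unfolding D2_def by auto
        ultimately show ?thesis using h True D2p ab unfolding adj_const_def rw_const_def \<alpha>_def
          by simp
      qed
    qed
  qed
  define f where "f = (\<lambda>x::'v \<Rightarrow> real. \<lambda>k. \<alpha> k * x k)"
  define g where "g = (\<lambda>x::'v \<Rightarrow> real. \<lambda>k. x k / \<alpha> k)"
  have nz: "\<And>x. {i. f x i \<noteq> 0} = {i. x i \<noteq> 0}" unfolding f_def using \<alpha>p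
    by (metis mult_eq_0_iff less_irrefl)
  have nzg: "\<And>x. {i. g x i \<noteq> 0} = {i. x i \<noteq> 0}" unfolding g_def using \<alpha>p
    by (metis divide_eq_0_iff less_irrefl)
  have fC: "\<And>x. x \<in> evo_carrier V \<Longrightarrow> f x \<in> evo_carrier V"
    unfolding evo_carrier_def using nz by (auto simp: f_def)
  have gC: "\<And>x. x \<in> evo_carrier V \<Longrightarrow> g x \<in> evo_carrier V"
    unfolding evo_carrier_def using nzg by (auto simp: g_def)
  have fg: "\<And>x. f (g x) = x" unfolding f_def g_def using \<alpha>p
    by (auto intro!: ext) (metis less_irrefl)
  have gf: "\<And>x. g (f x) = x" unfolding f_def g_def using \<alpha>p
    by (auto intro!: ext) (metis less_irrefl)
  have bij: "bij_betw f (evo_carrier V) (evo_carrier V)"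
    by (rule bij_betw_byWitness[where f'=g]) (auto simp: fC gC fg gf)
  have mult: "f (evo_mult (adj_const E) x y) = evo_mult (rw_const E) (f x) (f y)" for x y
  proof (rule ext)
    fix k
    have S: "{i. f x i \<noteq> 0 \<and> f y i \<noteq> 0} = {i. x i \<noteq> 0 \<and> y i \<noteq> 0}"
      using nz by blast
    have "f (evo_mult (adj_const E) x y) k
        = (\<Sum>i\<in>{i. x i \<noteq> 0 \<and> y i \<noteq> 0}. x i * y i * (\<alpha> k * adj_const E i k))"
      unfolding f_def evo_mult_def by (simp add: sum_distrib_left mult_ac)
    also have "\<dots> = (\<Sum>i\<in>{i. x i \<noteq> 0 \<and> y i \<noteq> 0}. x i * y i * ((\<alpha> i)^2 * rw_const E i k))"
      using key by simp
    also have "\<dots> = evo_mult (rw_const E) (f x) (f y) k"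
      unfolding evo_mult_def S by (simp add: f_def power2_eq_square mult_ac)
    finally show "f (evo_mult (adj_const E) x y) k = evo_mult (rw_const E) (f x) (f y) k" .
  qed
  show ?thesis unfolding evo_iso_def
  proof (intro exI[where x=f] conjI ballI allI)
    show "bij_betw f (evo_carrier V) (evo_carrier V)" by (rule bij)
  next
    fix x y :: "'v \<Rightarrow> real"
    show "f (evo_mult (adj_const E) x y) = evo_mult (rw_const E) (f x) (f y)" by (rule mult)
  qed (auto simp: f_def algebra_simps)
qed

end
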